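(* Suppose there is a sequence of positive numbers $(c_N)_{N\ge1}$ with $\lim_{N\to\infty}c_N^{1/N}=1$ such that for every $N\in\mathbb N$ and all origin-symmetric convex sets $K,T\subseteq\mathbb R^N$, \[ \gamma_N(K+T)\,\gamma_N(K\cap T)\ge c_N\,\gamma_N(K)\,\gamma_N(T). \] Then for every $d\ge1$ and all origin-symmetric convex sets $K,T\subseteq\mathbb R^d$, \[ \gamma_d(K+T)\,\gamma_d(K\cap T)\ge \gamma_d(K)\,\gamma_d(T). \]
   Context: $\gamma_m$ denotes the standard Gaussian probability measure on $\mathbb R^m$, with density proportional to $e^{-\|x\|^2/2}$. $K+T=\{x+y:x\in K,\ y\in T\}$ is the Minkowski sum. A set $K$ is origin-symmetric if $K=-K$. *)

theory Defs
  imports "HOL-Probability.Probability"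
begin

text \<open>Points of R^N are represented as extensional functions on the index set {..<N}
  (elements of PiE {..<N} (\<lambda>_. UNIV)), the carrier of the product measure.\<close>

definition RN :: "nat \<Rightarrow> (nat \<Rightarrow> real) set" where
  "RN N = PiE {..<N} (\<lambda>_. UNIV)"

text \<open>Standard Gaussian measure on R^N: product of N standard normal distributions,
  completed (so that all convex sets, being Lebesgue measurable, are measurable).\<close>

definition gauss :: "nat \<Rightarrow> (nat \<Rightarrow> real) measure" where
  "gauss N = completion (PiM {..<N} (\<lambda>_. density lborel std_normal_density))"

definition gamma :: "nat \<Rightarrow> (nat \<Rightarrow> real) set \<Rightarrow> real" where
  "gamma N A = measure (gauss N) A"

definition minkowski_sum :: "nat \<Rightarrow> (nat \<Rightarrow> real) set \<Rightarrow> (nat \<Rightarrow> real) set \<Rightarrow> (nat \<Rightarrow> real) set" where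
  "minkowski_sum N K T = {(\<lambda>i\<in>{..<N}. x i + y i) | x y. x \<in> K \<and> y \<in> T}"

definition convex_set :: "nat \<Rightarrow> (nat \<Rightarrow> real) set \<Rightarrow> bool" where
  "convex_set N K \<longleftrightarrow> K \<subseteq> RN N \<and>
     (\<forall>x\<in>K. \<forall>y\<in>K. \<forall>u::real. 0 \<le> u \<and> u \<le> 1 \<longrightarrow>
        (\<lambda>i\<in>{..<N}. (1 - u) * x i + u * y i) \<in> K)"

definition origin_symmetric :: "nat \<Rightarrow> (nat \<Rightarrow> real) set \<Rightarrow> bool" where
  "origin_symmetric N K \<longleftrightarrow> K \<subseteq> RN N \<and> (\<forall>x\<in>K. (\<lambda>i\<in>{..<N}. - x i) \<in> K)"

end

theory Submission
  imports Defs
begin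

abbreviation G :: "real measure" where "G \<equiv> density lborel std_normal_density"
abbreviation P :: "nat \<Rightarrow> (nat \<Rightarrow> real) measure" where "P n \<equiv> PiM {..<n} (\<lambda>_. G)"

lemma probG: "prob_space G" using prob_space_normal_density[of 1 0] by simp

interpretation GG: product_sigma_finite "\<lambda>_::nat. G"
  by (simp add: product_sigma_finite_def prob_space_imp_sigma_finite probG)

lemma probP: "prob_space (P n)" by (rule prob_space_PiM) (simp add: probG)

lemma spaceP: "space (P n) = RN n" by (simp add: space_PiM RN_def)

definition gl :: "nat \<Rightarrow> (nat \<Rightarrow> real) \<times> (nat \<Rightarrow> real) \<Rightarrow> (nat \<Rightarrow> real)" where
  "gl n = (\<lambda>p. \<lambda>i\<in>{..<2*n}. if i < n then fst p i else snd p (i - n))"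

lemma gl_meas: "gl n \<in> (P n \<Otimes>\<^sub>M P n) \<rightarrow>\<^sub>M P (2*n)"
  unfolding gl_def
proof (rule measurable_restrict)
  fix i assume "i \<in> {..<2*n}"
  show "(\<lambda>p. if i < n then fst p i else snd p (i - n)) \<in> (P n \<Otimes>\<^sub>M P n) \<rightarrow>\<^sub>M G"
  proof (cases "i < n")
    case True then show ?thesis by simp measurable
  next
    case False then have "i - n < n" using \<open>i \<in> _\<close> by auto
    with False show ?thesis by simp measurable
  qed
qed

lemma distr_gl: "distr (P n \<Otimes>\<^sub>M P n) (P (2*n)) (gl n) = P (2*n)"
proof (rule GG.PiM_eqI)
  interpret p: prob_space "P n" by (rule probP)
  fix A assume A: "\<And>i. i \<in> {..<2*n} \<Longrightarrow> A i \<in> sets G"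
  have AA: "A i \<in> sets G" if "i < 2*n" for i using A that by auto
  have AB: "A i \<in> sets borel" if "i < 2*n" for i using AA[OF that] by simp
  have pre: "gl n -` PiE {..<2*n} A \<inter> space (P n \<Otimes>\<^sub>M P n) = PiE {..<n} A \<times> PiE {..<n} (\<lambda>i. A (i+n))"
  proof (rule set_eqI)
    fix p :: "(nat \<Rightarrow> real) \<times> (nat \<Rightarrow> real)"
    obtain x y where p: "p = (x,y)" by (cases p)
    have f1: "\<And>i. i<2*n \<Longrightarrow> \<not> i<n \<Longrightarrow> i-n < n \<and> i-n+n = i" by auto
    have f2: "\<And>i. i<n \<Longrightarrow> i+n < 2*n \<and> \<not> (i+n<n) \<and> i+n-n = i" by auto
    show "p \<in> gl n -` PiE {..<2*n} A \<inter> space (P n \<Otimes>\<^sub>M P n) \<longleftrightarrow>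
          p \<in> PiE {..<n} A \<times> PiE {..<n} (\<lambda>i. A (i+n))"
      unfolding p gl_def space_pair_measure spaceP RN_def
      apply (auto simp: PiE_iff extensional_def)
      subgoal for i by (drule bspec[where x="i+n"]) auto
      subgoal premises pr for i using pr(3)[rule_format, of "i-n"] f1[OF pr(5) pr(6)] by simp
      done
  qed
  have "emeasure (distr (P n \<Otimes>\<^sub>M P n) (P (2*n)) (gl n)) (PiE {..<2*n} A)
      = emeasure (P n \<Otimes>\<^sub>M P n) (PiE {..<n} A \<times> PiE {..<n} (\<lambda>i. A (i+n)))"
    using gl_meas AA by (subst emeasure_distr) (auto simp: pre intro!: sets_PiM_I_finite)
  also have "\<dots> = (\<Prod>i<n. emeasure G (A i)) * (\<Prod>i<n. emeasure G (A (i+n)))"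
  proof -
    have e1: "emeasure (P n) (PiE {..<n} A) = (\<Prod>i<n. emeasure G (A i))"
      by (rule GG.emeasure_PiM) (auto intro: AB)
    have e2: "emeasure (P n) (PiE {..<n} (\<lambda>i. A (i+n))) = (\<Prod>i<n. emeasure G (A (i+n)))"
      by (rule GG.emeasure_PiM) (auto intro: AB)
    show ?thesis
      using AA by (subst p.emeasure_pair_measure_Times) (auto intro!: sets_PiM_I_finite simp: e1 e2)
  qed
  also have "\<dots> = (\<Prod>i<2*n. emeasure G (A i))"
  proof -
    have "(\<Prod>i<2*n. emeasure G (A i)) = (\<Prod>i\<in>{..<n}. emeasure G (A i)) * (\<Prod>i\<in>{n..<2*n}. emeasure G (A i))"
      by (metis lessThan_atLeast0 mult_2 prod.atLeastLessThan_concat le_add1 zero_le)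
    also have "(\<Prod>i\<in>{n..<2*n}. emeasure G (A i)) = (\<Prod>i<n. emeasure G (A (i+n)))"
      using prod.atLeastLessThan_shift_bounds[of "\<lambda>i. emeasure G (A i)" 0 n n]
      by (simp add: mult_2 lessThan_atLeast0 comp_def add.commute)
    finally show ?thesis by simp
  qed
  finally show "emeasure (distr (P n \<Otimes>\<^sub>M P n) (P (2*n)) (gl n)) (PiE {..<2*n} A) = (\<Prod>i<2*n. emeasure G (A i))" .
qed simp_all

definition dbl :: "nat \<Rightarrow> (nat \<Rightarrow> real) set \<Rightarrow> (nat \<Rightarrow> real) set" where
  "dbl n A = {z \<in> RN (2*n). restrict z {..<n} \<in> A \<and> (\<lambda>i\<in>{..<n}. z (i+n)) \<in> A}"

definition fs :: "nat \<Rightarrow> (nat \<Rightarrow> real) \<Rightarrow> (nat \<Rightarrow> real) \<times> (nat \<Rightarrow> real)" where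
  "fs n z = (restrict z {..<n}, \<lambda>i\<in>{..<n}. z (i+n))"

lemma fs_meas: "fs n \<in> P (2*n) \<rightarrow>\<^sub>M (P n \<Otimes>\<^sub>M P n)"
  unfolding fs_def
proof (rule measurable_Pair)
  show "(\<lambda>z. restrict z {..<n}) \<in> P (2*n) \<rightarrow>\<^sub>M P n"
    by (rule measurable_restrict) (auto intro!: measurable_component_singleton)
  show "(\<lambda>z. \<lambda>i\<in>{..<n}. z (i+n)) \<in> P (2*n) \<rightarrow>\<^sub>M P n"
    by (rule measurable_restrict) (auto intro!: measurable_component_singleton)
qed

lemma dbl_eq: "dbl n B = fs n -` (B \<times> B) \<inter> space (P (2*n))"
  unfolding dbl_def fs_def spaceP by auto

lemma dbl_sets: "B \<in> sets (P n) \<Longrightarrow> dbl n B \<in> sets (P (2*n))"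
  unfolding dbl_eq using fs_meas by (rule measurable_sets) (simp add: pair_measureI)

lemma dbl_mono: "A \<subseteq> B \<Longrightarrow> dbl n A \<subseteq> dbl n B"
  unfolding dbl_def by auto

lemma dbl_emeasure:
  assumes B: "B \<in> sets (P n)"
  shows "emeasure (P (2*n)) (dbl n B) = emeasure (P n) B * emeasure (P n) B"
proof -
  interpret p: prob_space "P n" by (rule probP)
  have BR: "B \<subseteq> RN n" using sets.sets_into_space[OF B] by (simp add: spaceP)
  have pre: "gl n -` dbl n B \<inter> space (P n \<Otimes>\<^sub>M P n) = B \<times> B"
  proof (rule set_eqI)
    fix p :: "(nat \<Rightarrow> real) \<times> (nat \<Rightarrow> real)"
    obtain x y where p: "p = (x,y)" by (cases p)
    have gR: "gl n (x,y) \<in> RN (2*n)" unfolding gl_def RN_def by auto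
    have r1: "x \<in> RN n \<Longrightarrow> restrict (gl n (x,y)) {..<n} = x"
      unfolding gl_def RN_def by (auto simp: PiE_iff extensional_def fun_eq_iff)
    have r2: "y \<in> RN n \<Longrightarrow> (\<lambda>i\<in>{..<n}. gl n (x,y) (i+n)) = y"
      unfolding gl_def RN_def by (auto simp: PiE_iff extensional_def fun_eq_iff)
    show "p \<in> gl n -` dbl n B \<inter> space (P n \<Otimes>\<^sub>M P n) \<longleftrightarrow> p \<in> B \<times> B"
      unfolding p space_pair_measure spaceP using BR gR r1 r2
      by (auto simp: dbl_def)
  qed
  have "emeasure (P (2*n)) (dbl n B) = emeasure (distr (P n \<Otimes>\<^sub>M P n) (P (2*n)) (gl n)) (dbl n B)"
    by (simp add: distr_gl)
  also have "\<dots> = emeasure (P n \<Otimes>\<^sub>M P n) (B \<times> B)"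
    using gl_meas dbl_sets[OF B] by (subst emeasure_distr) (auto simp: pre)
  also have "\<dots> = emeasure (P n) B * emeasure (P n) B"
    using B by (simp add: p.emeasure_pair_measure_Times)
  finally show ?thesis .
qed

lemma dbl_gamma:
  assumes A: "A \<in> sets (gauss n)"
  shows "dbl n A \<in> sets (gauss (2*n)) \<and> gamma (2*n) (dbl n A) = gamma n A ^ 2"
proof -
  interpret p: prob_space "P n" by (rule probP)
  interpret q: prob_space "P (2*n)" by (rule probP)
  interpret qc: prob_space "completion (P (2*n))" by (rule q.prob_space_completion)
  have Ac: "A \<in> sets (completion (P n))" using A by (simp add: gauss_def)
  define S where "S = main_part (P n) A"
  obtain N' where N': "N' \<in> null_sets (P n)" "null_part (P n) A \<subseteq> N'" using null_part[OF Ac] by auto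
  define C where "C = S \<union> N'"
  have S: "S \<in> sets (P n)" using Ac by (simp add: S_def)
  have C: "C \<in> sets (P n)" using S N' by (auto simp: C_def)
  have SA: "S \<subseteq> A" using main_part_null_part_Un[OF Ac] by (auto simp: S_def)
  have AC: "A \<subseteq> C" using main_part_null_part_Un[OF Ac] N' by (auto simp: S_def C_def)
  have eC: "emeasure (P n) C = emeasure (P n) S"
    unfolding C_def using S N'(1) by (rule emeasure_Un_null_set)
  have gA: "gamma n A = measure (P n) S"
    unfolding gamma_def gauss_def measure_def using Ac by (simp add: S_def)
  have dS: "dbl n S \<in> sets (P (2*n))" and dC: "dbl n C \<in> sets (P (2*n))"
    using dbl_sets S C by auto
  have eq2: "emeasure (P (2*n)) (dbl n C) = emeasure (P (2*n)) (dbl n S)"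
    using dbl_emeasure[OF S] dbl_emeasure[OF C] eC by simp
  have null: "dbl n C - dbl n S \<in> null_sets (P (2*n))"
  proof -
    have "emeasure (P (2*n)) (dbl n C - dbl n S) = emeasure (P (2*n)) (dbl n C) - emeasure (P (2*n)) (dbl n S)"
      using dS dC dbl_mono[OF order_trans[OF SA AC]] by (subst emeasure_Diff) auto
    also have "\<dots> = 0" using eq2 q.emeasure_finite[of "dbl n S"] by (simp add: diff_eq_0_iff_ennreal)
    finally show ?thesis using dS dC by auto
  qed
  have mem: "dbl n A \<in> sets (completion (P (2*n)))"
  proof (rule sets_completionI)
    show "dbl n A = dbl n S \<union> (dbl n A - dbl n S)" using dbl_mono[OF SA] by auto
    show "dbl n A - dbl n S \<subseteq> dbl n C - dbl n S" using dbl_mono[OF AC] by auto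
  qed (use null dS in auto)
  have m1: "measure (completion (P (2*n))) (dbl n S) \<le> measure (completion (P (2*n))) (dbl n A)"
    using mem dS dbl_mono[OF SA] by (intro qc.finite_measure_mono) auto
  have m2: "measure (completion (P (2*n))) (dbl n A) \<le> measure (completion (P (2*n))) (dbl n C)"
    using mem dC dbl_mono[OF AC] by (intro qc.finite_measure_mono) auto
  have vS: "measure (P (2*n)) (dbl n S) = measure (P n) S ^ 2"
    using dbl_emeasure[OF S] by (simp add: measure_def enn2real_mult power2_eq_square)
  have vC: "measure (P (2*n)) (dbl n C) = measure (P n) S ^ 2"
    using dbl_emeasure[OF C] eC by (simp add: measure_def enn2real_mult power2_eq_square)
  have "gamma (2*n) (dbl n A) = gamma n A ^ 2"
    using m1 m2 dS dC vS vC gA unfolding gamma_def gauss_def by simp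
  then show ?thesis using mem by (simp add: gauss_def)
qed

lemma gl_RN: "gl n (x,y) \<in> RN (2*n)" unfolding gl_def RN_def by auto
lemma gl_fst: "x \<in> RN n \<Longrightarrow> restrict (gl n (x,y)) {..<n} = x"
  unfolding gl_def RN_def by (auto simp: PiE_iff extensional_def fun_eq_iff)
lemma gl_snd: "y \<in> RN n \<Longrightarrow> (\<lambda>i\<in>{..<n}. gl n (x,y) (i+n)) = y"
  unfolding gl_def RN_def by (auto simp: PiE_iff extensional_def fun_eq_iff)

lemma dbl_RN: "dbl n A \<subseteq> RN (2*n)" unfolding dbl_def by auto

lemma dbl_Int: "dbl n (A \<inter> B) = dbl n A \<inter> dbl n B" unfolding dbl_def by auto

lemma dbl_convex: assumes "convex_set n K" shows "convex_set (2*n) (dbl n K)"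
  unfolding convex_set_def
proof (intro conjI ballI allI impI)
  show "dbl n K \<subseteq> RN (2*n)" by (rule dbl_RN)
  fix x y and u :: real assume x: "x \<in> dbl n K" and y: "y \<in> dbl n K" and u: "0 \<le> u \<and> u \<le> 1"
  let ?w = "\<lambda>i\<in>{..<2*n}. (1 - u) * x i + u * y i"
  have c: "\<And>a b. a \<in> K \<Longrightarrow> b \<in> K \<Longrightarrow> (\<lambda>i\<in>{..<n}. (1 - u) * a i + u * b i) \<in> K"
    using assms u unfolding convex_set_def by blast
  have e1: "restrict ?w {..<n} = (\<lambda>i\<in>{..<n}. (1 - u) * restrict x {..<n} i + u * restrict y {..<n} i)"
    by (auto simp: fun_eq_iff)
  have e2: "(\<lambda>i\<in>{..<n}. ?w (i+n)) = (\<lambda>i\<in>{..<n}. (1 - u) * (\<lambda>i\<in>{..<n}. x (i+n)) i + u * (\<lambda>i\<in>{..<n}. y (i+n)) i)"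
    by (auto simp: fun_eq_iff)
  from x have x1: "restrict x {..<n} \<in> K" and x2: "(\<lambda>i\<in>{..<n}. x (i+n)) \<in> K" unfolding dbl_def by auto
  from y have y1: "restrict y {..<n} \<in> K" and y2: "(\<lambda>i\<in>{..<n}. y (i+n)) \<in> K" unfolding dbl_def by auto
  have k1: "restrict ?w {..<n} \<in> K" unfolding e1 by (rule c[OF x1 y1])
  have k2: "(\<lambda>i\<in>{..<n}. ?w (i+n)) \<in> K" unfolding e2 by (rule c[OF x2 y2])
  have wR: "?w \<in> RN (2*n)" unfolding RN_def by auto
  show "?w \<in> dbl n K" unfolding dbl_def mem_Collect_eq using wR k1 k2 by blast
qed

lemma dbl_sym: assumes "origin_symmetric n K" shows "origin_symmetric (2*n) (dbl n K)"
  unfolding origin_symmetric_def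
proof (intro conjI ballI)
  show "dbl n K \<subseteq> RN (2*n)" by (rule dbl_RN)
  fix x assume x: "x \<in> dbl n K"
  let ?w = "\<lambda>i\<in>{..<2*n}. - x i"
  have c: "\<And>a. a \<in> K \<Longrightarrow> (\<lambda>i\<in>{..<n}. - a i) \<in> K"
    using assms unfolding origin_symmetric_def by blast
  have e1: "restrict ?w {..<n} = (\<lambda>i\<in>{..<n}. - restrict x {..<n} i)"
    by (auto simp: fun_eq_iff)
  have e2: "(\<lambda>i\<in>{..<n}. ?w (i+n)) = (\<lambda>i\<in>{..<n}. - (\<lambda>i\<in>{..<n}. x (i+n)) i)"
    by (auto simp: fun_eq_iff)
  from x have x1: "restrict x {..<n} \<in> K" and x2: "(\<lambda>i\<in>{..<n}. x (i+n)) \<in> K" unfolding dbl_def by auto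
  have k1: "restrict ?w {..<n} \<in> K" unfolding e1 by (rule c[OF x1])
  have k2: "(\<lambda>i\<in>{..<n}. ?w (i+n)) \<in> K" unfolding e2 by (rule c[OF x2])
  have wR: "?w \<in> RN (2*n)" unfolding RN_def by auto
  show "?w \<in> dbl n K" unfolding dbl_def mem_Collect_eq using wR k1 k2 by blast
qed

lemma dbl_mink:
  assumes K: "K \<subseteq> RN n" and T: "T \<subseteq> RN n"
  shows "minkowski_sum (2*n) (dbl n K) (dbl n T) = dbl n (minkowski_sum n K T)"
proof (rule set_eqI iffI)+
  fix z assume "z \<in> minkowski_sum (2*n) (dbl n K) (dbl n T)"
  then obtain x y where z: "z = (\<lambda>i\<in>{..<2*n}. x i + y i)" and x: "x \<in> dbl n K" and y: "y \<in> dbl n T"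
    unfolding minkowski_sum_def by auto
  have e1: "restrict z {..<n} = (\<lambda>i\<in>{..<n}. restrict x {..<n} i + restrict y {..<n} i)"
    unfolding z by (auto simp: fun_eq_iff)
  have e2: "(\<lambda>i\<in>{..<n}. z (i+n)) = (\<lambda>i\<in>{..<n}. (\<lambda>i\<in>{..<n}. x (i+n)) i + (\<lambda>i\<in>{..<n}. y (i+n)) i)"
    unfolding z by (auto simp: fun_eq_iff)
  have zR: "z \<in> RN (2*n)" unfolding z RN_def by auto
  show "z \<in> dbl n (minkowski_sum n K T)"
    unfolding dbl_def minkowski_sum_def using zR x y e1 e2 unfolding dbl_def by blast
next
  fix z assume "z \<in> dbl n (minkowski_sum n K T)"
  then have zR: "z \<in> RN (2*n)" and h1: "restrict z {..<n} \<in> minkowski_sum n K T"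
    and h2: "(\<lambda>i\<in>{..<n}. z (i+n)) \<in> minkowski_sum n K T" unfolding dbl_def by auto
  obtain a b where ab: "restrict z {..<n} = (\<lambda>i\<in>{..<n}. a i + b i)" "a \<in> K" "b \<in> T"
    using h1 unfolding minkowski_sum_def by auto
  obtain a' b' where ab': "(\<lambda>i\<in>{..<n}. z (i+n)) = (\<lambda>i\<in>{..<n}. a' i + b' i)" "a' \<in> K" "b' \<in> T"
    using h2 unfolding minkowski_sum_def by auto
  have aR: "a \<in> RN n" "a' \<in> RN n" "b \<in> RN n" "b' \<in> RN n" using ab ab' K T by auto
  have x: "gl n (a,a') \<in> dbl n K" unfolding dbl_def using gl_RN gl_fst gl_snd aR ab ab' by auto
  have y: "gl n (b,b') \<in> dbl n T" unfolding dbl_def using gl_RN gl_fst gl_snd aR ab ab' by auto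
  have "z = (\<lambda>i\<in>{..<2*n}. gl n (a,a') i + gl n (b,b') i)"
  proof (rule ext)
    fix i
    show "z i = (\<lambda>i\<in>{..<2*n}. gl n (a,a') i + gl n (b,b') i) i"
    proof (cases "i < n")
      case True
      have "z i = restrict z {..<n} i" using True by simp
      also have "\<dots> = a i + b i" using True ab(1) by simp
      finally show ?thesis using True by (simp add: gl_def)
    next
      case F: False
      show ?thesis
      proof (cases "i < 2*n")
        case True
        then have j: "i - n < n" "i - n + n = i" using F by auto
        have "z i = (\<lambda>i\<in>{..<n}. z (i+n)) (i - n)" using j by simp
        also have "\<dots> = a' (i-n) + b' (i-n)" using j ab'(1) by simp
        finally show ?thesis using True F by (simp add: gl_def)
      next
        case False
        then show ?thesis using zR by (auto simp: RN_def PiE_iff extensional_def)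
      qed
    qed
  qed
  then show "z \<in> minkowski_sum (2*n) (dbl n K) (dbl n T)"
    unfolding minkowski_sum_def using x y by blast
qed

fun itd :: "nat \<Rightarrow> nat \<Rightarrow> (nat \<Rightarrow> real) set \<Rightarrow> (nat \<Rightarrow> real) set" where
  "itd d 0 A = A"
| "itd d (Suc k) A = dbl (2^k*d) (itd d k A)"

lemma two_pow: "2^Suc k * d = 2 * (2^k * (d::nat))" by simp

lemma itd_RN: "A \<subseteq> RN d \<Longrightarrow> itd d k A \<subseteq> RN (2^k*d)"
  by (cases k) (simp_all add: dbl_RN[simplified mult.assoc[symmetric]] two_pow del: power_Suc)

lemma itd_convex: "convex_set d A \<Longrightarrow> convex_set (2^k*d) (itd d k A)"
  by (induction k) (simp_all add: two_pow dbl_convex del: power_Suc)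

lemma itd_sym: "origin_symmetric d A \<Longrightarrow> origin_symmetric (2^k*d) (itd d k A)"
  by (induction k) (simp_all add: two_pow dbl_sym del: power_Suc)

lemma itd_Int: "itd d k (A \<inter> B) = itd d k A \<inter> itd d k B"
  by (induction k) (simp_all add: dbl_Int)

lemma itd_mink: "A \<subseteq> RN d \<Longrightarrow> B \<subseteq> RN d \<Longrightarrow>
  minkowski_sum (2^k*d) (itd d k A) (itd d k B) = itd d k (minkowski_sum d A B)"
proof (induction k)
  case 0 then show ?case by simp
next
  case (Suc k)
  have "minkowski_sum (2^Suc k*d) (itd d (Suc k) A) (itd d (Suc k) B)
      = minkowski_sum (2*(2^k*d)) (dbl (2^k*d) (itd d k A)) (dbl (2^k*d) (itd d k B))"
    by (simp only: two_pow itd.simps)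
  also have "\<dots> = dbl (2^k*d) (minkowski_sum (2^k*d) (itd d k A) (itd d k B))"
    using itd_RN Suc.prems by (intro dbl_mink) auto
  also have "\<dots> = itd d (Suc k) (minkowski_sum d A B)" using Suc by simp
  finally show ?case .
qed

lemma itd_gamma: "A \<in> sets (gauss d) \<Longrightarrow>
   itd d k A \<in> sets (gauss (2^k*d)) \<and> gamma (2^k*d) (itd d k A) = gamma d A ^ (2^k)"
proof (induction k)
  case 0 then show ?case by simp
next
  case (Suc k)
  then have h: "itd d k A \<in> sets (gauss (2^k*d))" "gamma (2^k*d) (itd d k A) = gamma d A ^ (2^k)" by auto
  have "itd d (Suc k) A \<in> sets (gauss (2*(2^k*d))) \<and> gamma (2*(2^k*d)) (itd d (Suc k) A) = (gamma d A ^ (2^k))^2"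
    using dbl_gamma[OF h(1)] h(2) by simp
  then show ?case by (simp only: two_pow) (simp add: power_mult[symmetric] mult.commute)
qed

lemma root_step:
  fixes X Q c :: real and M :: nat
  assumes "X \<ge> 0" "Q \<ge> 0" "c > 0" "M > 0" "X^M \<ge> c * Q^M"
  shows "X \<ge> c powr (1/M) * Q"
proof (rule ccontr)
  assume "\<not> ?thesis"
  then have lt: "X < c powr (1/M) * Q" by simp
  have "(c powr (1/M))^M = c"
    using assms by (simp add: powr_realpow[symmetric] powr_powr)
  then have "(c powr (1/M) * Q)^M = c * Q^M" by (simp add: power_mult_distrib)
  moreover have "X^M < (c powr (1/M) * Q)^M"
    using lt assms by (intro power_strict_mono) auto
  ultimately show False using assms by simp
qed

theorem theorem1p6:
  fixes c :: "nat \<Rightarrow> real"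
  assumes pos: "\<forall>N\<ge>1. c N > 0"
    and lim: "(\<lambda>N. c N powr (1 / real N)) \<longlonglongrightarrow> 1"
    and hyp: "\<forall>N\<ge>1. \<forall>K T. convex_set N K \<and> origin_symmetric N K \<and>
                 convex_set N T \<and> origin_symmetric N T \<longrightarrow>
                 gamma N (minkowski_sum N K T) * gamma N (K \<inter> T) \<ge> c N * gamma N K * gamma N T"
    and d: "d \<ge> 1"
    and K: "convex_set d K" "origin_symmetric d K"
    and T: "convex_set d T" "origin_symmetric d T"
  shows "gamma d (minkowski_sum d K T) * gamma d (K \<inter> T) \<ge> gamma d K * gamma d T"
proof -
  define X where "X = gamma d (minkowski_sum d K T) * gamma d (K \<inter> T)"
  define Q where "Q = gamma d K * gamma d T"
  have X0: "X \<ge> 0" unfolding X_def gamma_def by simp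
  have Q0: "Q \<ge> 0" unfolding Q_def gamma_def by simp
  have hd: "c d * Q \<le> X" using hyp d K T unfolding X_def Q_def by (auto simp: mult.assoc)
  have cd: "c d > 0" using pos d by auto
  show ?thesis
  proof (cases "minkowski_sum d K T \<in> sets (gauss d) \<and> K \<inter> T \<in> sets (gauss d)")
    case False
    then have "X = 0" unfolding X_def gamma_def by (auto simp: measure_notin_sets)
    then have "Q \<le> 0" using hd cd by (simp add: mult_le_0_iff)
    then show ?thesis using \<open>X = 0\<close> unfolding X_def[symmetric] Q_def[symmetric] by simp
  next
    case True
    note MI = True
    show ?thesis
    proof (cases "K \<in> sets (gauss d) \<and> T \<in> sets (gauss d)")
      case False
      then have "Q = 0" unfolding Q_def gamma_def by (auto simp: measure_notin_sets)
      then show ?thesis using X0 unfolding X_def[symmetric] Q_def[symmetric] by simp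
    next
      case True
      have KR: "K \<subseteq> RN d" and TR: "T \<subseteq> RN d" using K T unfolding convex_set_def by auto
      define N where "N k = 2^k * d" for k
      have main: "X ^ (2^k) \<ge> c (N k) * Q ^ (2^k)" for k
      proof -
        have N1: "N k \<ge> 1" unfolding N_def using d by simp
        have h: "gamma (N k) (minkowski_sum (N k) (itd d k K) (itd d k T)) * gamma (N k) (itd d k K \<inter> itd d k T)
               \<ge> c (N k) * gamma (N k) (itd d k K) * gamma (N k) (itd d k T)"
          using hyp N1 itd_convex[OF K(1)] itd_sym[OF K(2)] itd_convex[OF T(1)] itd_sym[OF T(2)]
          unfolding N_def by blast
        have e1: "gamma (N k) (minkowski_sum (N k) (itd d k K) (itd d k T)) = gamma d (minkowski_sum d K T) ^ (2^k)"
          unfolding N_def itd_mink[OF KR TR] using itd_gamma MI by blast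
        have e2: "gamma (N k) (itd d k K \<inter> itd d k T) = gamma d (K \<inter> T) ^ (2^k)"
          unfolding N_def itd_Int[symmetric] using itd_gamma MI by blast
        have e3: "gamma (N k) (itd d k K) = gamma d K ^ (2^k)"
          unfolding N_def using itd_gamma True by blast
        have e4: "gamma (N k) (itd d k T) = gamma d T ^ (2^k)"
          unfolding N_def using itd_gamma True by blast
        show ?thesis using h unfolding e1 e2 e3 e4 X_def Q_def by (simp add: power_mult_distrib mult.assoc)
      qed
      have step: "X \<ge> c (N k) powr (1 / real (2^k)) * Q" for k
      proof -
        have "c (N k) > 0" using pos d unfolding N_def by simp
        then show ?thesis using root_step[OF X0 Q0 _ _ main[of k]] by simp
      qed
      have smN: "strict_mono N" unfolding N_def using d by (intro strict_monoI_Suc) simp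
      have l1: "(\<lambda>k. c (N k) powr (1 / real (N k))) \<longlonglongrightarrow> 1"
        using LIMSEQ_subseq_LIMSEQ[OF lim smN] by (simp add: comp_def)
      have l2: "(\<lambda>k. (c (N k) powr (1 / real (N k))) powr real d) \<longlonglongrightarrow> 1 powr real d"
        by (rule tendsto_powr[OF l1 tendsto_const]) simp
      have eq: "(c (N k) powr (1 / real (N k))) powr real d = c (N k) powr (1 / real (2^k))" for k
      proof -
        have "(c (N k) powr (1 / real (N k))) powr real d = c (N k) powr (1 / real (N k) * real d)"
          by (rule powr_powr)
        also have "1 / real (N k) * real d = 1 / real (2^k)" unfolding N_def using d by (simp add: field_simps)
        finally show ?thesis .
      qed
      have l3: "(\<lambda>k. c (N k) powr (1 / real (2^k)) * Q) \<longlonglongrightarrow> 1 * Q"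
        using l2 unfolding eq by (intro tendsto_mult tendsto_const) simp
      have "1 * Q \<le> X" using l3 step by (intro LIMSEQ_le_const2) auto
      then show ?thesis unfolding X_def Q_def by simp
    qed
  qed
qed

end
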